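(* Let $p\geq 2$ be an integer and $r=\lceil\log_2(p-1)\rceil$. For all integers $0\leq q_0,q_1\leq p-1$, all integers $0\leq r_1,r_2\leq r$ with $r_1+r_2=r$, and all integers $m\geq 2\binom{r_1+1}{2}+2\binom{r_2+1}{2}+2$, $$\mathrm{forb}(m,3,F(p-q_0,p,p,p-q_1))\geq \mathrm{forb}(m,3,p\cdot K_2)-\min\{q_0,q_1\}\binom{r_1+1}{2}-\max\{q_0,q_1\}\binom{r_2+1}{2}.$$
   Context: An $s$-matrix is a matrix with entries in $\{0,\dots,s-1\}$; simple means no repeated columns. $F\prec A$ means some submatrix of $A$ is a row/column permutation of $F$. $\mathrm{forb}(m,s,F)$ is the maximum number of columns of an $m$-rowed simple $s$-matrix $A$ with $F\not\prec A$. $F(a,b,c,d)$ is the 2-rowed $(0,1)$-matrix consisting of $a$ columns $\binom{0}{0}$, $b$ columns $\binom{1}{0}$, $c$ columns $\binom{0}{1}$ and $d$ columns $\binom{1}{1}$. $K_2$ is the $2\times4$ matrix of all $(0,1)$-columns of length 2 and $p\cdot K_2$ is the concatenation of $p$ copies of it. *)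

theory Defs
  imports Complex_Main
begin

text \<open>A column of length m is a function nat => nat, zero outside rows 0..m-1.
  A simple m-rowed s-matrix is a finite set of such columns (no repeated columns,
  column order is irrelevant since configurations allow column permutations).\<close>
definition simple_smatrix :: "nat \<Rightarrow> nat \<Rightarrow> (nat \<Rightarrow> nat) set \<Rightarrow> bool" where
  "simple_smatrix m s A \<longleftrightarrow> finite A \<and>
     (\<forall>c\<in>A. (\<forall>i<m. c i < s) \<and> (\<forall>i\<ge>m. c i = 0))"

text \<open>A general k-rowed matrix F is a list of columns (repetitions allowed).\<close>
definition config :: "nat \<Rightarrow> (nat \<Rightarrow> nat) list \<Rightarrow> nat \<Rightarrow> (nat \<Rightarrow> nat) set \<Rightarrow> bool" where
  "config k F m A \<longleftrightarrow> (\<exists>\<rho> \<sigma>. inj_on \<rho> {..<k} \<and> \<rho> ` {..<k} \<subseteq> {..<m} \<and>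
      inj_on \<sigma> {..<length F} \<and> \<sigma> ` {..<length F} \<subseteq> A \<and>
      (\<forall>j<length F. \<forall>i<k. \<sigma> j (\<rho> i) = (F ! j) i))"

definition forb :: "nat \<Rightarrow> nat \<Rightarrow> nat \<Rightarrow> (nat \<Rightarrow> nat) list \<Rightarrow> nat" where
  "forb m s k F = Max {card A | A. simple_smatrix m s A \<and> \<not> config k F m A}"

definition col2 :: "nat \<Rightarrow> nat \<Rightarrow> nat \<Rightarrow> nat" where
  "col2 x y = (\<lambda>i. if i = 0 then x else if i = 1 then y else 0)"

definition Fabcd :: "nat \<Rightarrow> nat \<Rightarrow> nat \<Rightarrow> nat \<Rightarrow> (nat \<Rightarrow> nat) list" where
  "Fabcd a b c d = replicate a (col2 0 0) @ replicate b (col2 1 0) @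
                   replicate c (col2 0 1) @ replicate d (col2 1 1)"

text \<open>p . K_2 = concatenation of p copies of K_2 (same multiset of columns as F(p,p,p,p)).\<close>
definition pK2 :: "nat \<Rightarrow> (nat \<Rightarrow> nat) list" where
  "pK2 p = concat (replicate p [col2 0 0, col2 1 0, col2 0 1, col2 1 1])"

end

theory Submission
  imports Defs
begin



definition Xb :: "bool \<Rightarrow> nat \<Rightarrow> nat" where "Xb c v = (if c then 1 - v else v)"
definition mk :: "nat \<Rightarrow> nat set \<Rightarrow> (nat \<Rightarrow> nat) \<Rightarrow> nat \<Rightarrow> nat" where
  "mk m S f = (\<lambda>i. if i < m then (if i \<in> S then f i else 2) else 0)"
definition desg :: "nat \<Rightarrow> nat \<Rightarrow> nat \<Rightarrow> nat \<Rightarrow> nat \<times> nat" where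
  "desg a b i j = (if j < a then (0,0) else if b \<le> i then (1,1) else (0,1))"
definition bitb :: "nat \<Rightarrow> nat \<Rightarrow> nat \<Rightarrow> nat \<Rightarrow> nat" where
  "bitb a b t i = (if t < a then (if i < a then (if i = t then 0 else 1) else 0)
      else if t < b then (if i < a then 1 else if i < b then (if i < t then 1 else 0) else 0)
      else (if i < b then 1 else if i = t then 1 else 0))"
definition tmpl :: "nat \<Rightarrow> nat \<Rightarrow> nat \<Rightarrow> nat \<Rightarrow> nat \<Rightarrow> nat" where
  "tmpl a b i j k = (if k = i then fst (desg a b i j) else if k = j then snd (desg a b i j)
     else if k < a then 1 else if b \<le> k then 0 else if k < i then 1 else if k < j then 2 else 0)"

lemma bitb_good:
  assumes "a \<le> b" "i < j"
  shows "(bitb a b t i, bitb a b t j) \<noteq> desg a b i j"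
  using assms unfolding bitb_def desg_def by auto

lemma tmpl_good:
  assumes "a \<le> b" "i < j" "k < l" "(k,l) \<noteq> (i,j)" "tmpl a b i j k \<noteq> 2" "tmpl a b i j l \<noteq> 2"
  shows "(tmpl a b i j k, tmpl a b i j l) \<noteq> desg a b k l"
  using assms unfolding tmpl_def desg_def by (auto split: if_splits)




lemma k2free_card:
  fixes S :: "nat set" and F :: "(nat \<Rightarrow> nat) set"
  assumes "finite S"
  shows "finite F \<Longrightarrow> (\<forall>x\<in>F. \<forall>i\<in>S. x i \<le> (1::nat)) \<Longrightarrow> (\<forall>x\<in>F. \<forall>y\<in>F. \<forall>i. i \<notin> S \<longrightarrow> x i = y i)
    \<Longrightarrow> (\<forall>i\<in>S. \<forall>j\<in>S. i \<noteq> j \<longrightarrow> (\<exists>u v. u \<le> 1 \<and> v \<le> 1 \<and> (\<forall>x\<in>F. \<not>(x i = u \<and> x j = v))))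
    \<Longrightarrow> card F \<le> card S + 1"
  using assms
proof (induction S arbitrary: F rule: finite_induct)
  case empty
  have "\<forall>x\<in>F. \<forall>y\<in>F. x = y" using empty.prems(3) by auto
  then have "card F \<le> Suc 0" using card_le_Suc0_iff_eq[OF empty.prems(1)] by blast
  then show ?case by simp
next
  case (insert s S)
  define f where "f = (\<lambda>x::nat\<Rightarrow>nat. x(s := 2))"
  define F0 where "F0 = {x\<in>F. x s = 0}"
  define F1 where "F1 = {x\<in>F. x s = 1}"
  have FU: "F = F0 \<union> F1" using insert.prems(2) unfolding F0_def F1_def by fastforce
  have fin0: "finite F0" "finite F1" using insert.prems(1) F0_def F1_def by auto
  have disj: "F0 \<inter> F1 = {}" unfolding F0_def F1_def by auto
  have inj0: "inj_on f F0"
  proof (rule inj_onI)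
    fix x y assume xy: "x \<in> F0" "y \<in> F0" "f x = f y"
    have "x k = y k" for k using fun_cong[OF xy(3), of k] xy(1,2) unfolding F0_def f_def
      by (cases "k = s") auto
    then show "x = y" by auto
  qed
  have inj1: "inj_on f F1"
  proof (rule inj_onI)
    fix x y assume xy: "x \<in> F1" "y \<in> F1" "f x = f y"
    have "x k = y k" for k using fun_cong[OF xy(3), of k] xy(1,2) unfolding F1_def f_def
      by (cases "k = s") auto
    then show "x = y" by auto
  qed
  have IH: "card (f ` F) \<le> card S + 1"
  proof (rule insert.IH)
    show "finite (f ` F)" using insert.prems(1) by simp
    show "\<forall>x\<in>f ` F. \<forall>i\<in>S. x i \<le> 1" using insert.prems(2) insert.hyps(2) unfolding f_def by auto
    show "\<forall>x\<in>f ` F. \<forall>y\<in>f ` F. \<forall>i. i \<notin> S \<longrightarrow> x i = y i" using insert.prems(3) unfolding f_def by auto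
    show "\<forall>i\<in>S. \<forall>j\<in>S. i \<noteq> j \<longrightarrow> (\<exists>u v. u \<le> 1 \<and> v \<le> 1 \<and> (\<forall>x\<in>f ` F. \<not> (x i = u \<and> x j = v)))"
    proof (intro ballI impI)
      fix i j assume "i \<in> S" "j \<in> S" "i \<noteq> j"
      then obtain u v where uv: "u \<le> 1" "v \<le> 1" "\<forall>x\<in>F. \<not>(x i = u \<and> x j = v)" using insert.prems(4) by blast
      have "i \<noteq> s" "j \<noteq> s" using \<open>i \<in> S\<close> \<open>j \<in> S\<close> insert.hyps(2) by auto
      then have "\<forall>x\<in>f ` F. \<not> (x i = u \<and> x j = v)" using uv(3) unfolding f_def by auto
      then show "\<exists>u v. u \<le> 1 \<and> v \<le> 1 \<and> (\<forall>x\<in>f ` F. \<not> (x i = u \<and> x j = v))"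
        using uv(1,2) by blast
    qed
  qed
  have small: "card (f ` F0 \<inter> f ` F1) \<le> 1"
  proof -
    have "\<forall>y\<in>f ` F0 \<inter> f ` F1. \<forall>z\<in>f ` F0 \<inter> f ` F1. y = z"
    proof (intro ballI, rule ccontr)
      fix y z assume y: "y \<in> f ` F0 \<inter> f ` F1" and z: "z \<in> f ` F0 \<inter> f ` F1" and ne: "y \<noteq> z"
      obtain x0 x1 w0 w1 where x0: "x0 \<in> F0" "y = f x0" and x1: "x1 \<in> F1" "y = f x1"
        and w0: "w0 \<in> F0" "z = f w0" and w1: "w1 \<in> F1" "z = f w1" using y z by blast
      obtain i where "y i \<noteq> z i" using ne by auto
      have "i \<noteq> s" using \<open>y i \<noteq> z i\<close> x0 w0 unfolding f_def by auto
      have iS: "i \<in> S"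
      proof (rule ccontr)
        assume "i \<notin> S"
        then have "x0 i = w0 i" using insert.prems(3) x0 w0 \<open>i \<noteq> s\<close> unfolding F0_def by auto
        then show False using \<open>y i \<noteq> z i\<close> x0 w0 \<open>i \<noteq> s\<close> unfolding f_def by auto
      qed
      have vals: "x0 i = y i" "x1 i = y i" "w0 i = z i" "w1 i = z i"
        using fun_cong[OF x0(2), of i] fun_cong[OF x1(2), of i] fun_cong[OF w0(2), of i] fun_cong[OF w1(2), of i]
          \<open>i \<noteq> s\<close> unfolding f_def by auto
      have "x0 i \<le> 1" "w0 i \<le> 1" using insert.prems(2) x0(1) w0(1) iS unfolding F0_def by auto
      then have le: "y i \<le> 1" "z i \<le> 1" using vals by auto
      obtain u v where uv: "u \<le> 1" "v \<le> 1" "\<forall>x\<in>F. \<not>(x i = u \<and> x s = v)"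
        using insert.prems(4) iS \<open>i \<noteq> s\<close> by blast
      have s: "x0 s = 0" "w0 s = 0" "x1 s = 1" "w1 s = 1" using x0 x1 w0 w1 unfolding F0_def F1_def by auto
      have inF: "x0 \<in> F" "x1 \<in> F" "w0 \<in> F" "w1 \<in> F" using x0 x1 w0 w1 unfolding F0_def F1_def by auto
      have "u = y i \<or> u = z i" using le uv(1) \<open>y i \<noteq> z i\<close> by linarith
      moreover have "v = 0 \<or> v = 1" using uv(2) by linarith
      ultimately show False
      proof (elim disjE)
        assume "u = y i" "v = 0" then show False using uv(3) inF(1) vals(1) s(1) by blast
      next
        assume "u = y i" "v = 1" then show False using uv(3) inF(2) vals(2) s(3) by blast
      next
        assume "u = z i" "v = 0" then show False using uv(3) inF(3) vals(3) s(2) by blast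
      next
        assume "u = z i" "v = 1" then show False using uv(3) inF(4) vals(4) s(4) by blast
      qed
    qed
    then have "card (f ` F0 \<inter> f ` F1) \<le> Suc 0" using card_le_Suc0_iff_eq[of "f ` F0 \<inter> f ` F1"] fin0 by blast
    then show ?thesis by simp
  qed
  have "card F = card F0 + card F1" using FU disj fin0 card_Un_disjoint by metis
  also have "\<dots> = card (f ` F0) + card (f ` F1)" using inj0 inj1 card_image by metis
  also have "\<dots> = card (f ` F0 \<union> f ` F1) + card (f ` F0 \<inter> f ` F1)"
    using card_Un_Int fin0 by blast
  also have "\<dots> \<le> card (f ` F) + 1" using small FU by (simp add: image_Un)
  finally show ?case using IH insert.hyps by simp
qed



lemma card_pairs_shift: "card {(i,j). b \<le> i \<and> i < j \<and> j < b + n} = n choose 2"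
proof (induction n)
  case 0
  have e: "{(i,j). b \<le> i \<and> i < j \<and> j < b} = ({}::(nat\<times>nat) set)" by auto
  show ?case unfolding add_0_right e by simp
next
  case (Suc n)
  have eq: "{(i,j). b \<le> i \<and> i < j \<and> j < b + Suc n} =
     {(i,j). b \<le> i \<and> i < j \<and> j < b + n} \<union> (\<lambda>i. (i, b+n)) ` {b..<b+n}" by auto
  have fin: "finite {(i,j). b \<le> i \<and> i < j \<and> j < b + n}"
    by (rule finite_subset[of _ "{..<b+n} \<times> {..<b+n}"]) auto
  have dis: "{(i,j). b \<le> i \<and> i < j \<and> j < b + n} \<inter> (\<lambda>i. (i, b+n)) ` {b..<b+n} = {}" by auto
  have "card ((\<lambda>i. (i, b+n)) ` {b..<b+n}) = n" by (subst card_image) (auto simp: inj_on_def)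
  then have "card {(i,j). b \<le> i \<and> i < j \<and> j < b + Suc n} = (n choose 2) + n"
    using eq fin dis Suc.IH by (simp add: card_Un_disjoint)
  also have "\<dots> = Suc n choose 2" by (simp add: choose_two) (cases n; simp add: algebra_simps; presburger)
  finally show ?case .
qed




lemma nth_concat_replicate: "n < p * length xs \<Longrightarrow> concat (replicate p xs) ! n = xs ! (n mod length xs)"
proof (induction p arbitrary: n)
  case 0 then show ?case by simp
next
  case (Suc p)
  show ?case
  proof (cases "n < length xs")
    case True then show ?thesis by (simp add: nth_append)
  next
    case False
    then have "n - length xs < p * length xs" using Suc.prems by auto
    then show ?thesis using Suc.IH False by (simp add: nth_append mod_if)
  qed
qed

lemma pK2_len: "length (pK2 p) = 4 * p"
  unfolding pK2_def by (simp add: length_concat sum_list_replicate)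

lemma pK2_nth: "n < 4 * p \<Longrightarrow> pK2 p ! n = [col2 0 0, col2 1 0, col2 0 1, col2 1 1] ! (n mod 4)"
  unfolding pK2_def using nth_concat_replicate[of n p "[col2 0 0, col2 1 0, col2 0 1, col2 1 1]"] by (simp add: mult.commute)

lemma Fabcd_len: "length (Fabcd a b c d) = a + b + c + d"
  unfolding Fabcd_def by simp

lemma Fabcd_nth:
  "n < a \<Longrightarrow> Fabcd a b c d ! n = col2 0 0"
  "a \<le> n \<Longrightarrow> n < a + b \<Longrightarrow> Fabcd a b c d ! n = col2 1 0"
  "a + b \<le> n \<Longrightarrow> n < a + b + c \<Longrightarrow> Fabcd a b c d ! n = col2 0 1"
  "a + b + c \<le> n \<Longrightarrow> n < a + b + c + d \<Longrightarrow> Fabcd a b c d ! n = col2 1 1"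
  unfolding Fabcd_def by (auto simp: nth_append)



lemma log_bound:
  assumes "(p::nat) \<ge> 2"
  shows "p - 1 \<le> 2 ^ nat \<lceil>log 2 (real p - 1)\<rceil>"
proof -
  have pos: "real p - 1 \<ge> 1" using assms by auto
  have "real p - 1 = 2 powr (log 2 (real p - 1))" using pos by simp
  also have "\<dots> \<le> 2 powr (real_of_int \<lceil>log 2 (real p - 1)\<rceil>)" by (intro powr_mono) auto
  also have "\<dots> = 2 powr (real (nat \<lceil>log 2 (real p - 1)\<rceil>))"
    using pos by (simp add: ceiling_le_zero)
  also have "\<dots> = 2 ^ nat \<lceil>log 2 (real p - 1)\<rceil>" by (simp add: powr_realpow)
  finally have "real (p - 1) \<le> real (2 ^ nat \<lceil>log 2 (real p - 1)\<rceil>)" using assms by (simp add: of_nat_diff)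
  then show ?thesis by linarith
qed




definition allcols :: "nat \<Rightarrow> (nat \<Rightarrow> nat) set" where
  "allcols m = {c. (\<forall>i<m. c i < 3) \<and> (\<forall>i\<ge>m. c i = 0)}"

lemma finite_allcols: "finite (allcols m)"
proof -
  let ?g = "\<lambda>xs (i::nat). if i < m then xs ! i else (0::nat)"
  have sub: "allcols m \<subseteq> ?g ` {xs. set xs \<subseteq> {..<3} \<and> length xs = m}"
  proof
    fix c assume c: "c \<in> allcols m"
    let ?xs = "map c [0..<m]"
    have ci: "c i = ?g ?xs i" for i
    proof (cases "i < m")
      case True then show ?thesis by simp
    next
      case False then show ?thesis using c unfolding allcols_def by simp
    qed
    have "c = ?g ?xs" using ci by (rule ext)
    moreover have "?xs \<in> {xs. set xs \<subseteq> {..<3} \<and> length xs = m}" using c unfolding allcols_def by auto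
    ultimately show "c \<in> ?g ` {xs. set xs \<subseteq> {..<3} \<and> length xs = m}" by (rule image_eqI)
  qed
  have "finite {xs. set xs \<subseteq> {..<3::nat} \<and> length xs = m}"
    by (rule finite_lists_length_eq) auto
  then have "finite (?g ` {xs. set xs \<subseteq> {..<3::nat} \<and> length xs = m})" by (rule finite_imageI)
  from finite_subset[OF sub this] show ?thesis .
qed

lemma simple_sub: "simple_smatrix m 3 A \<Longrightarrow> A \<subseteq> allcols m"
proof
  fix c assume "simple_smatrix m 3 A" "c \<in> A"
  then show "c \<in> allcols m" unfolding simple_smatrix_def allcols_def by simp
qed


lemma forb_finite: "finite {card A | A. simple_smatrix m 3 A \<and> \<not> config k F m A}"
proof -
  have "{card A | A. simple_smatrix m 3 A \<and> \<not> config k F m A} \<subseteq> card ` Pow (allcols m)"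
  proof
    fix n assume "n \<in> {card A | A. simple_smatrix m 3 A \<and> \<not> config k F m A}"
    then obtain A where A: "n = card A" "simple_smatrix m 3 A" by (auto simp only: mem_Collect_eq)
    have "A \<in> Pow (allcols m)" using simple_sub[OF A(2)] by (simp only: Pow_iff)
    then show "n \<in> card ` Pow (allcols m)" using A(1) by (rule rev_image_eqI)
  qed
  moreover have "finite (card ` Pow (allcols m))" using finite_allcols by simp
  ultimately show ?thesis by (rule finite_subset)
qed


lemma forb_ge: "simple_smatrix m 3 A \<Longrightarrow> \<not> config k F m A \<Longrightarrow> card A \<le> forb m 3 k F"
proof -
  assume "simple_smatrix m 3 A" "\<not> config k F m A"
  then have "card A \<in> {card A | A. simple_smatrix m 3 A \<and> \<not> config k F m A}" by (auto simp only: mem_Collect_eq)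
  then show ?thesis unfolding forb_def by (rule Max_ge[OF forb_finite])
qed

lemma forb_attained:
  assumes "F \<noteq> []"
  shows "\<exists>A. simple_smatrix m 3 A \<and> \<not> config k F m A \<and> card A = forb m 3 k F"
proof -
  have e1: "simple_smatrix m 3 {}" unfolding simple_smatrix_def by simp
  have e2: "\<not> config k F m {}"
  proof
    assume "config k F m {}"
    then show False unfolding config_def using assms by auto
  qed
  have "card ({}::(nat\<Rightarrow>nat) set) \<in> {card A | A. simple_smatrix m 3 A \<and> \<not> config k F m A}" unfolding mem_Collect_eq using e1 e2 by blast
  then have ne: "{card A | A. simple_smatrix m 3 A \<and> \<not> config k F m A} \<noteq> {}" by blast
  have "forb m 3 k F \<in> {card A | A. simple_smatrix m 3 A \<and> \<not> config k F m A}"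
    unfolding forb_def using forb_finite ne by (rule Max_in)
  then show ?thesis by (auto simp only: mem_Collect_eq)
qed



lemma pK2_config:
  assumes ij: "i \<noteq> j" "i < m" "j < m" and fin: "finite A"
    and big: "\<forall>u v. u \<le> 1 \<longrightarrow> v \<le> 1 \<longrightarrow> p \<le> card {x\<in>A. x i = u \<and> x j = v}"
  shows "config 2 (pK2 p) m A"
proof -
  define St where "St t = {x\<in>A. x i = t mod 2 \<and> x j = t div 2}" for t :: nat
  have "\<forall>t. \<exists>g. t < 4 \<longrightarrow> g ` {..<p} \<subseteq> St t \<and> inj_on g {..<p}"
  proof
    fix t
    show "\<exists>g. t < 4 \<longrightarrow> g ` {..<p} \<subseteq> St t \<and> inj_on g {..<p}"
    proof (cases "t < 4")
      case True
      have "t mod 2 \<le> 1" "t div 2 \<le> 1" using True by auto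
      then have "card {..<p} \<le> card (St t)" using big unfolding St_def by simp
      moreover have "finite (St t)" using fin unfolding St_def by simp
      ultimately obtain g where "g ` {..<p} \<subseteq> St t" "inj_on g {..<p}"
        using card_le_inj[of "{..<p}" "St t"] by auto
      then show ?thesis by blast
    qed simp
  qed
  from choice[OF this] obtain G where G0: "\<forall>t. t < 4 \<longrightarrow> G t ` {..<p} \<subseteq> St t \<and> inj_on (G t) {..<p}"
    by blast
  then have G: "\<And>t. t < 4 \<Longrightarrow> G t ` {..<p} \<subseteq> St t \<and> inj_on (G t) {..<p}" by blast
  define \<sigma> where "\<sigma> n = G (n mod 4) (n div 4)" for n
  define \<rho> where "\<rho> k = (if k = 0 then i else j)" for k :: nat
  have sig: "\<sigma> n \<in> St (n mod 4)" if "n < 4 * p" for n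
  proof -
    have "n div 4 < p" using that by auto
    then show ?thesis using G[of "n mod 4"] unfolding \<sigma>_def by auto
  qed
  show ?thesis unfolding config_def
  proof (intro exI conjI)
    show "inj_on \<rho> {..<2}" unfolding \<rho>_def inj_on_def using ij by auto
    show "\<rho> ` {..<2} \<subseteq> {..<m}" unfolding \<rho>_def using ij by auto
    show "inj_on \<sigma> {..<length (pK2 p)}"
    proof (rule inj_onI)
      fix n n' assume n: "n \<in> {..<length (pK2 p)}" and n': "n' \<in> {..<length (pK2 p)}" and e: "\<sigma> n = \<sigma> n'"
      have nl: "n < 4 * p" "n' < 4 * p" using n n' pK2_len by auto
      have "\<sigma> n i = n mod 4 mod 2" "\<sigma> n j = n mod 4 div 2" using sig[OF nl(1)] unfolding St_def by auto
      moreover have "\<sigma> n' i = n' mod 4 mod 2" "\<sigma> n' j = n' mod 4 div 2" using sig[OF nl(2)] unfolding St_def by auto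
      ultimately have "n mod 4 mod 2 = n' mod 4 mod 2" "n mod 4 div 2 = n' mod 4 div 2" using e by auto
      moreover have "n mod 4 = n mod 4 div 2 * 2 + n mod 4 mod 2" by (rule div_mult_mod_eq[symmetric])
      moreover have "n' mod 4 = n' mod 4 div 2 * 2 + n' mod 4 mod 2" by (rule div_mult_mod_eq[symmetric])
      ultimately have t: "n mod 4 = n' mod 4" by simp
      have "n div 4 < p" "n' div 4 < p" using nl by auto
      moreover have "G (n mod 4) (n div 4) = G (n mod 4) (n' div 4)" using e t unfolding \<sigma>_def by simp
      ultimately have "n div 4 = n' div 4" using G[of "n mod 4"] unfolding inj_on_def by auto
      moreover have "n = n div 4 * 4 + n mod 4" by (rule div_mult_mod_eq[symmetric])
      moreover have "n' = n' div 4 * 4 + n' mod 4" by (rule div_mult_mod_eq[symmetric])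
      ultimately show "n = n'" using t by simp
    qed
    show "\<sigma> ` {..<length (pK2 p)} \<subseteq> A" using sig pK2_len unfolding St_def by auto
    show "\<forall>n<length (pK2 p). \<forall>k<2. \<sigma> n (\<rho> k) = (pK2 p ! n) k"
    proof (intro allI impI)
      fix n k assume n: "n < length (pK2 p)" and k: "k < (2::nat)"
      have nl: "n < 4 * p" using n pK2_len by auto
      have s: "\<sigma> n i = n mod 4 mod 2" "\<sigma> n j = n mod 4 div 2" using sig[OF nl] unfolding St_def by auto
      have "n mod 4 < 4" by simp
      then have "n mod 4 = 0 \<or> n mod 4 = 1 \<or> n mod 4 = 2 \<or> n mod 4 = 3" by linarith
      moreover have "k = 0 \<or> k = 1" using k by linarith
      ultimately show "\<sigma> n (\<rho> k) = (pK2 p ! n) k"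
        using s pK2_nth[OF nl] unfolding \<rho>_def col2_def by auto
    qed
  qed
qed

lemma pK2_deficient:
  assumes "simple_smatrix m 3 A" "\<not> config 2 (pK2 p) m A" "i \<noteq> j" "i < m" "j < m"
  shows "\<exists>u v. u \<le> 1 \<and> v \<le> 1 \<and> card {x\<in>A. x i = u \<and> x j = v} < p"
proof (rule ccontr)
  assume "\<not> ?thesis"
  then have "\<forall>u v. u \<le> 1 \<longrightarrow> v \<le> 1 \<longrightarrow> p \<le> card {x\<in>A. x i = u \<and> x j = v}" by (auto simp: not_less)
  moreover have "finite A" using assms(1) unfolding simple_smatrix_def by simp
  ultimately have "config 2 (pK2 p) m A" using pK2_config assms(3,4,5) by blast
  then show False using assms(2) by simp
qed

lemma Fabcd_counts:
  assumes "config 2 (Fabcd a b c d) m A" "finite A"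
  shows "\<exists>i j. i \<noteq> j \<and> i < m \<and> j < m \<and>
     a \<le> card {x\<in>A. x i = 0 \<and> x j = 0} \<and> b \<le> card {x\<in>A. x i = 1 \<and> x j = 0} \<and>
     c \<le> card {x\<in>A. x i = 0 \<and> x j = 1} \<and> d \<le> card {x\<in>A. x i = 1 \<and> x j = 1}"
proof -
  obtain \<rho> \<sigma> where r1: "inj_on \<rho> {..<2}" and r2: "\<rho> ` {..<2} \<subseteq> {..<m}"
    and s1: "inj_on \<sigma> {..<length (Fabcd a b c d)}" and s2: "\<sigma> ` {..<length (Fabcd a b c d)} \<subseteq> A"
    and e: "\<forall>n<length (Fabcd a b c d). \<forall>k<2. \<sigma> n (\<rho> k) = (Fabcd a b c d ! n) k"
    apply (insert assms(1)[unfolded config_def])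
    apply (elim exE conjE)
    apply (rule that)
        apply assumption+
    done
  define i where "i = \<rho> 0"
  define j where "j = \<rho> 1"
  have ij: "i \<noteq> j" using r1 unfolding i_def j_def inj_on_def by fastforce
  have ijm: "i < m" "j < m" using subsetD[OF r2, of "\<rho> 0"] subsetD[OF r2, of "\<rho> 1"] unfolding i_def j_def by auto
  have L: "length (Fabcd a b c d) = a + b + c + d" by (rule Fabcd_len)
  have gen: "card I \<le> card {x\<in>A. x i = u \<and> x j = v}"
    if I: "I \<subseteq> {..<a+b+c+d}" and col: "\<And>n. n \<in> I \<Longrightarrow> Fabcd a b c d ! n = col2 u v" for I u v
  proof -
    have "\<sigma> ` I \<subseteq> {x\<in>A. x i = u \<and> x j = v}"
    proof
      fix x assume "x \<in> \<sigma> ` I"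
      then obtain n where n: "n \<in> I" "x = \<sigma> n" by blast
      have nl: "n < length (Fabcd a b c d)" using n I L by auto
      have "\<sigma> n i = u" using e nl col[OF n(1)] unfolding i_def col2_def by auto
      moreover have "\<sigma> n j = v" using e nl col[OF n(1)] unfolding j_def col2_def by auto
      moreover have "\<sigma> n \<in> A" using s2 nl by auto
      ultimately show "x \<in> {x\<in>A. x i = u \<and> x j = v}" using n by simp
    qed
    moreover have "inj_on \<sigma> I" using I L by (intro inj_on_subset[OF s1]) auto
    ultimately have "card (\<sigma> ` I) \<le> card {x\<in>A. x i = u \<and> x j = v}"
      using assms(2) by (intro card_mono) auto
    then show ?thesis using card_image[OF \<open>inj_on \<sigma> I\<close>] by simp
  qed
  have "a \<le> card {x\<in>A. x i = 0 \<and> x j = 0}"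
  proof -
    have "card {..<a} \<le> card {x\<in>A. x i = 0 \<and> x j = 0}" by (rule gen) (auto simp: Fabcd_nth)
    then show ?thesis by simp
  qed
  moreover have "b \<le> card {x\<in>A. x i = 1 \<and> x j = 0}"
  proof -
    have "card {a..<a+b} \<le> card {x\<in>A. x i = 1 \<and> x j = 0}" by (rule gen) (auto simp: Fabcd_nth)
    then show ?thesis by simp
  qed
  moreover have "c \<le> card {x\<in>A. x i = 0 \<and> x j = 1}"
  proof -
    have "card {a+b..<a+b+c} \<le> card {x\<in>A. x i = 0 \<and> x j = 1}" by (rule gen) (auto simp: Fabcd_nth)
    then show ?thesis by simp
  qed
  moreover have "d \<le> card {x\<in>A. x i = 1 \<and> x j = 1}"
  proof -
    have "card {a+b+c..<a+b+c+d} \<le> card {x\<in>A. x i = 1 \<and> x j = 1}" by (rule gen) (auto simp: Fabcd_nth)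
    then show ?thesis by simp
  qed
  ultimately show ?thesis using ij ijm by blast
qed




definition hits :: "nat \<Rightarrow> nat \<Rightarrow> bool \<Rightarrow> (nat \<Rightarrow> nat) \<Rightarrow> nat \<Rightarrow> nat \<Rightarrow> bool" where
  "hits a b c x i j \<longleftrightarrow> x i = Xb c (fst (desg a b i j)) \<and> x j = Xb c (snd (desg a b i j))"
definition bv :: "nat \<Rightarrow> nat \<Rightarrow> nat \<Rightarrow> bool \<Rightarrow> nat set \<Rightarrow> nat \<Rightarrow> nat \<Rightarrow> nat" where
  "bv m a b c S t = mk m S (\<lambda>i. Xb c (bitb a b t i))"
definition Tset :: "nat \<Rightarrow> nat \<Rightarrow> nat \<Rightarrow> nat \<Rightarrow> nat \<Rightarrow> nat set" where
  "Tset m a b i j = {k. k < m \<and> k \<noteq> i \<and> k \<noteq> j \<and> tmpl a b i j k \<noteq> 2}"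
definition exv :: "nat \<Rightarrow> nat \<Rightarrow> nat \<Rightarrow> bool \<Rightarrow> nat \<Rightarrow> nat \<Rightarrow> nat set \<Rightarrow> nat \<Rightarrow> nat" where
  "exv m a b c i j U = mk m (U \<union> {i,j}) (\<lambda>k. Xb c (tmpl a b i j k))"

lemma Xb_le: "v \<le> 1 \<Longrightarrow> Xb c v \<le> 1" unfolding Xb_def by auto
lemma Xb_le2: "v \<le> 2 \<Longrightarrow> Xb c v \<le> 2" unfolding Xb_def by auto
lemma Xb_inj: "u \<le> 1 \<Longrightarrow> v \<le> 1 \<Longrightarrow> Xb c u = Xb c v \<Longrightarrow> u = v" unfolding Xb_def by (auto split: if_splits)
lemma bitb_le: "bitb a b t i \<le> 1" unfolding bitb_def by auto
lemma Xb_lt3: "v \<le> 2 \<Longrightarrow> Xb c v < 3" unfolding Xb_def by auto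
lemma desg_le: "fst (desg a b i j) \<le> 1" "snd (desg a b i j) \<le> 1" unfolding desg_def by auto
lemma tmpl_le: "tmpl a b i j k \<le> 2" unfolding tmpl_def desg_def by auto
lemma tmpl_le1: "tmpl a b i j k \<noteq> 2 \<Longrightarrow> tmpl a b i j k \<le> 1" using tmpl_le[of a b i j k] by linarith

lemma bv_col: "bv m a b c S t \<in> allcols m"
proof -
  have "bitb a b t i \<le> 2" for i using bitb_le[of a b t i] by linarith
  then show ?thesis unfolding allcols_def bv_def mk_def using Xb_lt3 by auto
qed

lemma bv_val: "i < m \<Longrightarrow> i \<in> S \<Longrightarrow> bv m a b c S t i = Xb c (bitb a b t i)"
  "i < m \<Longrightarrow> i \<notin> S \<Longrightarrow> bv m a b c S t i = 2"
  unfolding bv_def mk_def by auto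

lemma Xb_ne2: "v \<le> 1 \<Longrightarrow> Xb c v \<noteq> 2" using Xb_le[of v c] by auto

lemma bv_supp: "S \<subseteq> {..<m} \<Longrightarrow> {k. k < m \<and> bv m a b c S t k \<noteq> 2} = S"
proof -
  assume S: "S \<subseteq> {..<m}"
  have "k \<in> S \<longleftrightarrow> k < m \<and> bv m a b c S t k \<noteq> 2" for k
  proof (cases "k < m")
    case True then show ?thesis using bv_val[of k m S a b c t] Xb_ne2[OF bitb_le] by auto
  next
    case False then show ?thesis using S by auto
  qed
  then show ?thesis by blast
qed

lemma bv_nohit:
  assumes "a \<le> b" "i < j" "j < m"
  shows "\<not> hits a b c (bv m a b c S t) i j"
proof
  assume h: "hits a b c (bv m a b c S t) i j"
  have im: "i < m" using assms by simp
  show False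
  proof (cases "i \<in> S \<and> j \<in> S")
    case True
    have e1: "bv m a b c S t i = Xb c (bitb a b t i)" using True im by (simp add: bv_val)
    have e2: "bv m a b c S t j = Xb c (bitb a b t j)" using True assms(3) by (simp add: bv_val)
    have h1: "Xb c (bitb a b t i) = Xb c (fst (desg a b i j))" using h e1 unfolding hits_def by simp
    have h2: "Xb c (bitb a b t j) = Xb c (snd (desg a b i j))" using h e2 unfolding hits_def by simp
    have "bitb a b t i = fst (desg a b i j)" by (rule Xb_inj[OF bitb_le desg_le(1) h1])
    moreover have "bitb a b t j = snd (desg a b i j)" by (rule Xb_inj[OF bitb_le desg_le(2) h2])
    ultimately have "(bitb a b t i, bitb a b t j) = desg a b i j" by (simp add: prod_eq_iff)
    then show False using bitb_good[OF assms(1,2), of t] by simp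
  next
    case False
    then have "i \<notin> S \<or> j \<notin> S" by simp
    then show False
    proof
      assume "i \<notin> S"
      then have "bv m a b c S t i = 2" using im by (simp add: bv_val)
      then show False using h Xb_ne2[OF desg_le(1)] unfolding hits_def by simp
    next
      assume "j \<notin> S"
      then have "bv m a b c S t j = 2" using assms(3) by (simp add: bv_val)
      then show False using h Xb_ne2[OF desg_le(2)] unfolding hits_def by simp
    qed
  qed
qed

lemma bitb_sep:
  assumes ab: "a \<le> b" "b \<le> m" and S: "S \<subseteq> {..<m}" and t: "t \<in> insert m S" "t' \<in> insert m S" "t \<noteq> t'"
  shows "\<exists>i\<in>S. bitb a b t i \<noteq> bitb a b t' i"
proof -
  have key: "\<exists>i\<in>S. bitb a b t i \<noteq> bitb a b t' i"
    if ab: "a \<le> b" "b \<le> m" and t: "t \<in> insert m S" "t' \<in> insert m S" "t < t'" for t t'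
  proof -
    have tS: "t \<in> S" using t S by auto
    show ?thesis
    proof (cases "t < a")
      case True
      have "bitb a b t t = 0" using True by (simp add: bitb_def)
      moreover have "bitb a b t' t = 1" using True ab \<open>t < t'\<close> by (simp add: bitb_def)
      ultimately show ?thesis using tS by (intro bexI[of _ t]) simp_all
    next
      case F1: False
      show ?thesis
      proof (cases "t < b")
        case True
        have "bitb a b t t = 0" using True F1 by (simp add: bitb_def)
        moreover have "bitb a b t' t = 1" using True F1 \<open>t < t'\<close> by (simp add: bitb_def)
        ultimately show ?thesis using tS by (intro bexI[of _ t]) simp_all
      next
        case False
        have "bitb a b t t = 1" using False F1 by (simp add: bitb_def)
        moreover have "bitb a b t' t = 0" using False F1 \<open>t < t'\<close> by (simp add: bitb_def)
        ultimately show ?thesis using tS by (intro bexI[of _ t]) simp_all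
      qed
    qed
  qed
  show ?thesis
  proof (cases "t < t'")
    case True then show ?thesis using key[OF ab t(1,2) True] by blast
  next
    case False
    then have "t' < t" using t(3) by simp
    from key[OF ab t(2,1) this] obtain i where i: "i \<in> S" "bitb a b t' i \<noteq> bitb a b t i" by blast
    from i(2) have "bitb a b t i \<noteq> bitb a b t' i" by (rule not_sym)
    with i(1) show ?thesis by blast
  qed
qed

lemma bv_inj:
  assumes "a \<le> b" "b \<le> m" "S \<subseteq> {..<m}"
  shows "inj_on (bv m a b c S) (insert m S)"
proof (rule inj_onI, rule ccontr)
  fix t t' assume t: "t \<in> insert m S" "t' \<in> insert m S" "bv m a b c S t = bv m a b c S t'" "t \<noteq> t'"
  obtain i where i: "i \<in> S" "bitb a b t i \<noteq> bitb a b t' i" using bitb_sep[OF assms t(1,2,4)] by blast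
  have "i < m" using i assms by auto
  then have "Xb c (bitb a b t i) = Xb c (bitb a b t' i)" using fun_cong[OF t(3), of i] i bv_val(1) by metis
  then show False using Xb_inj[OF bitb_le bitb_le] i by blast
qed

lemma exv_col: "exv m a b c i j U \<in> allcols m"
  unfolding allcols_def exv_def mk_def using Xb_lt3[OF tmpl_le] by auto

lemma exv_val: "k < m \<Longrightarrow> k \<in> U \<union> {i,j} \<Longrightarrow> exv m a b c i j U k = Xb c (tmpl a b i j k)"
  "k < m \<Longrightarrow> k \<notin> U \<union> {i,j} \<Longrightarrow> exv m a b c i j U k = 2"
  unfolding exv_def mk_def by auto

lemma exv_hit:
  assumes "i < j" "j < m"
  shows "hits a b c (exv m a b c i j U) i j"
  using assms exv_val(1)[of i m U i j a b c] exv_val(1)[of j m U i j a b c] unfolding hits_def tmpl_def by auto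

lemma exv_only:
  assumes ab: "a \<le> b" and ij: "i < j" "j < m" and U: "U \<subseteq> Tset m a b i j"
    and kl: "k < l" "l < m" "(k,l) \<noteq> (i,j)"
  shows "\<not> hits a b c (exv m a b c i j U) k l"
proof
  assume h: "hits a b c (exv m a b c i j U) k l"
  have km: "k < m" using kl by simp
  have nt: "tmpl a b i j z \<noteq> 2" if "z \<in> U \<union> {i,j}" for z
  proof -
    have "z \<in> U \<or> z = i \<or> z = j" using that by auto
    then show ?thesis using U unfolding Tset_def using desg_le[of a b i j] ij unfolding tmpl_def by auto
  qed
  show False
  proof (cases "k \<in> U \<union> {i,j} \<and> l \<in> U \<union> {i,j}")
    case True
    then have kU: "k \<in> U \<union> {i,j}" "l \<in> U \<union> {i,j}" by auto
    have e1: "exv m a b c i j U k = Xb c (tmpl a b i j k)" by (rule exv_val(1)[OF km kU(1)])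
    have e2: "exv m a b c i j U l = Xb c (tmpl a b i j l)" by (rule exv_val(1)[OF kl(2) kU(2)])
    have h1: "Xb c (tmpl a b i j k) = Xb c (fst (desg a b k l))" using h e1 unfolding hits_def by simp
    have h2: "Xb c (tmpl a b i j l) = Xb c (snd (desg a b k l))" using h e2 unfolding hits_def by simp
    have "tmpl a b i j k = fst (desg a b k l)" by (rule Xb_inj[OF tmpl_le1[OF nt[OF kU(1)]] desg_le(1) h1])
    moreover have "tmpl a b i j l = snd (desg a b k l)" by (rule Xb_inj[OF tmpl_le1[OF nt[OF kU(2)]] desg_le(2) h2])
    ultimately have "(tmpl a b i j k, tmpl a b i j l) = desg a b k l" by (simp add: prod_eq_iff)
    then show False using tmpl_good[OF ab ij(1) kl(1) kl(3) nt[OF kU(1)] nt[OF kU(2)]] by simp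
  next
    case False
    then have "k \<notin> U \<union> {i,j} \<or> l \<notin> U \<union> {i,j}" by simp
    then show False
    proof
      assume "k \<notin> U \<union> {i,j}"
      then have "exv m a b c i j U k = 2" by (rule exv_val(2)[OF km])
      then show False using h Xb_ne2[OF desg_le(1)] unfolding hits_def by simp
    next
      assume "l \<notin> U \<union> {i,j}"
      then have "exv m a b c i j U l = 2" by (rule exv_val(2)[OF kl(2)])
      then show False using h Xb_ne2[OF desg_le(2)] unfolding hits_def by simp
    qed
  qed
qed

lemma exv_inj:
  assumes "i < m" "j < m"
  shows "inj_on (exv m a b c i j) (Pow (Tset m a b i j))"
proof (rule inj_onI, rule ccontr)
  fix U V assume UV: "U \<in> Pow (Tset m a b i j)" "V \<in> Pow (Tset m a b i j)" "exv m a b c i j U = exv m a b c i j V" "U \<noteq> V"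
  obtain k where k: "k \<in> U \<and> k \<notin> V \<or> k \<in> V \<and> k \<notin> U" using UV(4) by blast
  then have kT: "k \<in> Tset m a b i j" using UV(1,2) by auto
  then have kk: "k < m" "k \<noteq> i" "k \<noteq> j" "tmpl a b i j k \<noteq> 2" unfolding Tset_def by auto
  have ne: "Xb c (tmpl a b i j k) \<noteq> 2" using Xb_ne2[OF tmpl_le1[OF kk(4)]] .
  have "exv m a b c i j U k = exv m a b c i j V k" using UV(3) by simp
  then show False using k kk ne exv_val[of k m U i j a b c] exv_val[of k m V i j a b c] by auto
qed

lemma Tset_card:
  assumes "a \<le> b" "b \<le> m"
  shows "a + (m - b) - 2 \<le> card (Tset m a b i j)"
proof -
  have sub: "({..<a} \<union> {b..<m}) - {i,j} \<subseteq> Tset m a b i j"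
    using assms unfolding Tset_def tmpl_def by auto
  have c1: "card ({..<a} \<union> {b..<m}) = a + (m - b)"
    using assms by (subst card_Un_disjoint) auto
  have "card ({..<a} \<union> {b..<m}) - card {i,j} \<le> card (({..<a} \<union> {b..<m}) - {i,j})"
    by (rule diff_card_le_card_Diff) auto
  moreover have "card {i,j} \<le> 2" by (simp add: card_insert_le_m1)
  moreover have "card (({..<a} \<union> {b..<m}) - {i,j}) \<le> card (Tset m a b i j)"
    using sub by (rule card_mono[rotated]) (simp add: Tset_def)
  ultimately show ?thesis using c1 by linarith
qed





lemma upper_bound:
  assumes simp: "simple_smatrix m 3 A" and nc: "\<not> config 2 (pK2 p) m A"
  shows "card A \<le> (\<Sum>S\<in>Pow {..<m}. card S + 1) + (p - 1) * card {(i,j). i < j \<and> j < m}"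
proof -
  let ?P = "{(i,j). i < j \<and> j < (m::nat)}"
  have finA: "finite A" using simp unfolding simple_smatrix_def by simp
  have colA: "\<And>x k. x \<in> A \<Longrightarrow> k < m \<Longrightarrow> x k < 3" "\<And>x k. x \<in> A \<Longrightarrow> m \<le> k \<Longrightarrow> x k = 0"
    using simp unfolding simple_smatrix_def by auto
  have finP: "finite ?P" by (rule finite_subset[of _ "{..<m} \<times> {..<m}"]) auto
  define des where "des i j = (SOME uv. fst uv \<le> 1 \<and> snd uv \<le> (1::nat) \<and>
      card {x\<in>A. x i = fst uv \<and> x j = snd uv} < p)" for i j
  have des: "fst (des i j) \<le> 1 \<and> snd (des i j) \<le> 1 \<and> card {x\<in>A. x i = fst (des i j) \<and> x j = snd (des i j)} < p"
    if ij: "i < j" "j < m" for i j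
  proof -
    have "i \<noteq> j" "i < m" using ij by auto
    then obtain u v where "u \<le> 1" "v \<le> 1" "card {x\<in>A. x i = u \<and> x j = v} < p"
      using pK2_deficient[OF simp nc, of i j] ij(2) by blast
    then have "\<exists>uv. fst uv \<le> 1 \<and> snd uv \<le> (1::nat) \<and> card {x\<in>A. x i = fst uv \<and> x j = snd uv} < p"
      by (intro exI[of _ "(u,v)"]) simp
    then show ?thesis unfolding des_def by (rule someI_ex)
  qed
  define hit where "hit x i j \<longleftrightarrow> x i = fst (des i j) \<and> x j = snd (des i j)" for x :: "nat \<Rightarrow> nat" and i j
  define G where "G = {x\<in>A. \<forall>i j. i < j \<longrightarrow> j < m \<longrightarrow> \<not> hit x i j}"
  define H where "H i j = {x\<in>A. hit x i j}" for i j
  have AU: "A \<subseteq> G \<union> (\<Union>(i,j)\<in>?P. H i j)" unfolding G_def H_def by auto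
  have c1: "card A \<le> card (G \<union> (\<Union>(i,j)\<in>?P. H i j))"
    by (rule card_mono[OF _ AU]) (use finA finP in \<open>auto simp: G_def H_def\<close>)
  have c2: "card (G \<union> (\<Union>(i,j)\<in>?P. H i j)) \<le> card G + card (\<Union>(i,j)\<in>?P. H i j)" by (rule card_Un_le)
  have c3: "card (\<Union>(i,j)\<in>?P. H i j) \<le> (p - 1) * card ?P"
  proof -
    have "card (\<Union>(i,j)\<in>?P. H i j) \<le> (\<Sum>ij\<in>?P. card (case ij of (i,j) \<Rightarrow> H i j))"
      using card_UN_le[OF finP, of "\<lambda>ij. case ij of (i,j) \<Rightarrow> H i j"] by (simp add: case_prod_beta)
    also have "\<dots> \<le> (\<Sum>ij\<in>?P. p - 1)"
    proof (rule sum_mono)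
      fix ij assume "ij \<in> ?P"
      then obtain i j where ij: "ij = (i,j)" "i < j" "j < m" by auto
      have "card (H i j) < p" using des[OF ij(2,3)] unfolding H_def hit_def by simp
      then show "card (case ij of (i,j) \<Rightarrow> H i j) \<le> p - 1" using ij(1) by simp
    qed
    also have "\<dots> = (p - 1) * card ?P" by simp
    finally show ?thesis .
  qed
  have c4: "card G \<le> (\<Sum>S\<in>Pow {..<m}. card S + 1)"
  proof -
    define GS where "GS S = {x\<in>G. {k. k < m \<and> x k \<noteq> 2} = S}" for S
    have "G \<subseteq> (\<Union>S\<in>Pow {..<m}. GS S)"
    proof
      fix x assume x: "x \<in> G"
      show "x \<in> (\<Union>S\<in>Pow {..<m}. GS S)"
      proof (rule UN_I[of "{k. k < m \<and> x k \<noteq> 2}"])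
        show "{k. k < m \<and> x k \<noteq> 2} \<in> Pow {..<m}" by auto
        show "x \<in> GS {k. k < m \<and> x k \<noteq> 2}" using x unfolding GS_def by simp
      qed
    qed
    then have "card G \<le> card (\<Union>S\<in>Pow {..<m}. GS S)"
    proof (rule card_mono[rotated])
      have "(\<Union>S\<in>Pow {..<m}. GS S) \<subseteq> A" unfolding GS_def G_def by blast
      then show "finite (\<Union>S\<in>Pow {..<m}. GS S)" using finA by (rule finite_subset)
    qed
    also have "\<dots> \<le> (\<Sum>S\<in>Pow {..<m}. card (GS S))" by (rule card_UN_le) simp
    also have "\<dots> \<le> (\<Sum>S\<in>Pow {..<m}. card S + 1)"
    proof (rule sum_mono)
      fix S assume S: "S \<in> Pow {..<m}"
      have finS: "finite S" using S finite_subset by auto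
      show "card (GS S) \<le> card S + 1"
      proof (rule k2free_card[OF finS])
        show "finite (GS S)" using finA unfolding GS_def G_def by auto
        show "\<forall>x\<in>GS S. \<forall>i\<in>S. x i \<le> 1"
        proof (intro ballI)
          fix x i assume x: "x \<in> GS S" and i: "i \<in> S"
          then have "x \<in> A" "i < m" "x i \<noteq> 2" unfolding GS_def G_def by auto
          then show "x i \<le> 1" using colA(1) by fastforce
        qed
        show "\<forall>x\<in>GS S. \<forall>y\<in>GS S. \<forall>i. i \<notin> S \<longrightarrow> x i = y i"
        proof (intro ballI allI impI)
          fix x y i assume x: "x \<in> GS S" and y: "y \<in> GS S" and i: "i \<notin> S"
          show "x i = y i"
          proof (cases "i < m")
            case True
            then have "x i = 2" "y i = 2" using x y i unfolding GS_def by auto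
            then show ?thesis by simp
          next
            case False
            have "x \<in> A" "y \<in> A" using x y unfolding GS_def G_def by auto
            moreover have "m \<le> i" using False by simp
            ultimately have "x i = 0" "y i = 0" using colA(2) by blast+
            then show ?thesis by simp
          qed
        qed
        show "\<forall>i\<in>S. \<forall>j\<in>S. i \<noteq> j \<longrightarrow> (\<exists>u v. u \<le> 1 \<and> v \<le> 1 \<and> (\<forall>x\<in>GS S. \<not> (x i = u \<and> x j = v)))"
        proof (intro ballI impI)
          fix i j assume i: "i \<in> S" and j: "j \<in> S" and ne: "i \<noteq> j"
          have im: "i < m" "j < m" using S i j by auto
          show "\<exists>u v. u \<le> 1 \<and> v \<le> 1 \<and> (\<forall>x\<in>GS S. \<not> (x i = u \<and> x j = v))"
          proof (cases "i < j")
            case True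
            have "\<forall>x\<in>GS S. \<not> (x i = fst (des i j) \<and> x j = snd (des i j))"
              using True im unfolding GS_def G_def hit_def by auto
            then show ?thesis using des[OF True im(2)] by blast
          next
            case False
            then have ji: "j < i" using ne by simp
            have "\<forall>x\<in>GS S. \<not> (x i = snd (des j i) \<and> x j = fst (des j i))"
              using ji im unfolding GS_def G_def hit_def by auto
            then show ?thesis using des[OF ji im(1)] by blast
          qed
        qed
      qed
    qed
    finally show ?thesis .
  qed
  show ?thesis using c1 c2 c3 c4 by linarith
qed



lemma allcols_simple: "A \<subseteq> allcols m \<Longrightarrow> simple_smatrix m 3 A"
proof -
  assume A: "A \<subseteq> allcols m"
  have "finite A" using A finite_allcols by (rule finite_subset)
  moreover have "\<forall>c\<in>A. (\<forall>i<m. c i < 3) \<and> (\<forall>i\<ge>m. c i = 0)" using A unfolding allcols_def by blast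
  ultimately show ?thesis unfolding simple_smatrix_def by blast
qed

lemma lower_construction:
  fixes m a b :: nat and c :: bool and bud :: "nat \<Rightarrow> nat \<Rightarrow> nat"
  assumes ab: "a \<le> b" "b \<le> m"
    and cap: "\<And>i j. i < j \<Longrightarrow> j < m \<Longrightarrow> bud i j \<le> 2 ^ (a + (m - b) - 2)"
  shows "\<exists>A. simple_smatrix m 3 A \<and>
     card A = (\<Sum>S\<in>Pow {..<m}. card S + 1) + (\<Sum>(i,j)\<in>{(i,j). i < j \<and> j < m}. bud i j) \<and>
     (\<forall>i j. i < j \<longrightarrow> j < m \<longrightarrow> card {x\<in>A. hits a b c x i j} \<le> bud i j)"
proof -
  let ?P = "{(i,j). i < j \<and> j < (m::nat)}"
  have finP: "finite ?P" by (rule finite_subset[of _ "{..<m} \<times> {..<m}"]) auto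
  define Cap where "Cap i j = exv m a b c i j ` Pow (Tset m a b i j)" for i j
  have cap_hit: "hits a b c x i j" if xC: "x \<in> Cap i j" and ij: "i < j" "j < m" for x i j
  proof -
    obtain U where U: "x = exv m a b c i j U" using xC unfolding Cap_def by blast
    show ?thesis using exv_hit[OF ij] U by simp
  qed
  have cap_only: "\<not> hits a b c x k l" if xC: "x \<in> Cap i j" and hy: "i < j" "j < m" "k < l" "l < m" "(k,l) \<noteq> (i,j)" for x i j k l
  proof -
    obtain U where U: "U \<subseteq> Tset m a b i j" "x = exv m a b c i j U" using xC unfolding Cap_def by blast
    show ?thesis using exv_only[OF ab(1) hy(1,2) U(1) hy(3,4,5)] U(2) by simp
  qed
  have cap_col: "Cap i j \<subseteq> allcols m" for i j unfolding Cap_def by (rule image_subsetI) (rule exv_col)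
  have cap_card: "bud i j \<le> card (Cap i j)" if "i < j" "j < m" for i j
  proof -
    have finT: "finite (Tset m a b i j)" unfolding Tset_def by simp
    have "card (Cap i j) = card (Pow (Tset m a b i j))"
      unfolding Cap_def using that by (intro card_image exv_inj) auto
    also have "\<dots> = 2 ^ card (Tset m a b i j)" using finT by (rule card_Pow)
    finally have e: "card (Cap i j) = 2 ^ card (Tset m a b i j)" .
    have "(2::nat) ^ (a + (m - b) - 2) \<le> 2 ^ card (Tset m a b i j)"
      by (rule power_increasing[OF Tset_card[OF ab]]) simp
    then show ?thesis using cap[OF that] e by linarith
  qed
  define E where "E i j = (SOME E. E \<subseteq> Cap i j \<and> card E = bud i j)" for i j
  have E: "E i j \<subseteq> Cap i j \<and> card (E i j) = bud i j" if ij: "i < j" "j < m" for i j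
  proof -
    obtain F where "F \<subseteq> Cap i j" "card F = bud i j" using obtain_subset_with_card_n[OF cap_card[OF ij]] by metis
    then have "\<exists>F. F \<subseteq> Cap i j \<and> card F = bud i j" by blast
    then show ?thesis unfolding E_def by (rule someI_ex)
  qed
  define Base where "Base = (\<Union>S\<in>Pow {..<m}. bv m a b c S ` insert m S)"
  define Ext where "Ext = (\<Union>(i,j)\<in>?P. E i j)"
  define A where "A = Base \<union> Ext"
  have baseC: "Base \<subseteq> allcols m" unfolding Base_def by (intro UN_least image_subsetI) (rule bv_col)
  have extC: "Ext \<subseteq> allcols m"
  proof
    fix x assume "x \<in> Ext"
    then obtain i j where "(i,j) \<in> ?P" "x \<in> E i j" unfolding Ext_def by blast
    then show "x \<in> allcols m" using E[of i j] cap_col[of i j] by auto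
  qed
  have AC: "A \<subseteq> allcols m" unfolding A_def using baseC extC by blast
  have finB: "finite Base" using baseC finite_allcols finite_subset by blast
  have finE: "finite Ext" using extC finite_allcols finite_subset by blast
  have base_nohit: "\<not> hits a b c x i j" if xB: "x \<in> Base" and ij: "i < j" "j < m" for x i j
  proof -
    obtain S t where "x = bv m a b c S t" using xB unfolding Base_def by blast
    then show ?thesis using bv_nohit[OF ab(1) ij] by simp
  qed
  have ext_hit: "\<exists>i j. i < j \<and> j < m \<and> hits a b c x i j" if xE: "x \<in> Ext" for x
  proof -
    obtain i j where ij: "(i,j) \<in> ?P" "x \<in> E i j" using xE unfolding Ext_def by blast
    then have "x \<in> Cap i j" using E[of i j] by auto
    then show ?thesis using cap_hit ij by blast
  qed
  have disjBE: "Base \<inter> Ext = {}" using base_nohit ext_hit by blast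
  have cardBase: "card Base = (\<Sum>S\<in>Pow {..<m}. card S + 1)"
  proof -
    have "card Base = (\<Sum>S\<in>Pow {..<m}. card (bv m a b c S ` insert m S))"
      unfolding Base_def
    proof (rule card_UN_disjoint)
      show "finite (Pow {..<m})" by simp
      show "\<forall>S\<in>Pow {..<m}. finite (bv m a b c S ` insert m S)"
        using finite_subset by (auto intro: finite_subset[of _ "{..<m}"])
      show "\<forall>S\<in>Pow {..<m}. \<forall>S'\<in>Pow {..<m}. S \<noteq> S' \<longrightarrow> bv m a b c S ` insert m S \<inter> bv m a b c S' ` insert m S' = {}"
      proof (intro ballI impI)
        fix S S' assume S: "S \<in> Pow {..<m}" and S': "S' \<in> Pow {..<m}" and ne: "S \<noteq> S'"
        show "bv m a b c S ` insert m S \<inter> bv m a b c S' ` insert m S' = {}"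
        proof (rule ccontr)
          assume "bv m a b c S ` insert m S \<inter> bv m a b c S' ` insert m S' \<noteq> {}"
          then obtain t t' where "bv m a b c S t = bv m a b c S' t'" by blast
          then have "{k. k < m \<and> bv m a b c S t k \<noteq> 2} = {k. k < m \<and> bv m a b c S' t' k \<noteq> 2}" by simp
          then show False using bv_supp[of S m a b c t] bv_supp[of S' m a b c t'] S S' ne by simp
        qed
      qed
    qed
    also have "\<dots> = (\<Sum>S\<in>Pow {..<m}. card S + 1)"
    proof (rule sum.cong)
      fix S assume S: "S \<in> Pow {..<m}"
      then have "S \<subseteq> {..<m}" by simp
      then have finS: "finite S" and mS: "m \<notin> S" using finite_subset by auto
      have "card (bv m a b c S ` insert m S) = card (insert m S)"
        by (rule card_image[OF bv_inj[OF ab \<open>S \<subseteq> {..<m}\<close>]])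
      also have "\<dots> = card S + 1" using finS mS by simp
      finally show "card (bv m a b c S ` insert m S) = card S + 1" .
    qed simp
    finally show ?thesis .
  qed
  have cardExt: "card Ext = (\<Sum>(i,j)\<in>?P. bud i j)"
  proof -
    have "card Ext = (\<Sum>ij\<in>?P. card (case ij of (i,j) \<Rightarrow> E i j))"
      unfolding Ext_def
    proof (rule card_UN_disjoint)
      show "finite ?P" by (rule finP)
      show "\<forall>ij\<in>?P. finite (case ij of (i,j) \<Rightarrow> E i j)"
      proof
        fix ij assume "ij \<in> ?P"
        then obtain i j where "ij = (i,j)" "i < j" "j < m" by blast
        then show "finite (case ij of (i,j) \<Rightarrow> E i j)"
          using E[of i j] cap_col[of i j] finite_allcols finite_subset by (metis (no_types, lifting) case_prod_conv order_trans)
      qed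
      show "\<forall>ij\<in>?P. \<forall>kl\<in>?P. ij \<noteq> kl \<longrightarrow> (case ij of (i,j) \<Rightarrow> E i j) \<inter> (case kl of (i,j) \<Rightarrow> E i j) = {}"
      proof (intro ballI impI)
        fix ij kl assume ij: "ij \<in> ?P" and kl: "kl \<in> ?P" and ne: "ij \<noteq> kl"
        obtain i j where ij': "ij = (i,j)" "i < j" "j < m" using ij by blast
        obtain k l where kl': "kl = (k,l)" "k < l" "l < m" using kl by blast
        show "(case ij of (i,j) \<Rightarrow> E i j) \<inter> (case kl of (i,j) \<Rightarrow> E i j) = {}"
        proof (rule ccontr)
          assume "(case ij of (i,j) \<Rightarrow> E i j) \<inter> (case kl of (i,j) \<Rightarrow> E i j) \<noteq> {}"
          then obtain x where x: "x \<in> E i j" "x \<in> E k l" using ij' kl' by auto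
          have xc: "x \<in> Cap i j" "x \<in> Cap k l" using x E[OF ij'(2,3)] E[OF kl'(2,3)] by auto
          have "hits a b c x k l" using cap_hit[OF xc(2) kl'(2,3)] .
          moreover have "(k,l) \<noteq> (i,j)" using ne ij'(1) kl'(1) by auto
          ultimately show False using cap_only[OF xc(1) ij'(2,3) kl'(2,3)] by blast
        qed
      qed
    qed
    also have "\<dots> = (\<Sum>(i,j)\<in>?P. bud i j)"
    proof (rule sum.cong)
      fix ij assume "ij \<in> ?P"
      then obtain i j where "ij = (i,j)" "i < j" "j < m" by blast
      then show "card (case ij of (i,j) \<Rightarrow> E i j) = (case ij of (i,j) \<Rightarrow> bud i j)" using E[of i j] by simp
    qed simp
    finally show ?thesis .
  qed
  have cardA: "card A = (\<Sum>S\<in>Pow {..<m}. card S + 1) + (\<Sum>(i,j)\<in>?P. bud i j)"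
    unfolding A_def using card_Un_disjoint[OF finB finE disjBE] cardBase cardExt by simp
  have cnt: "card {x\<in>A. hits a b c x i j} \<le> bud i j" if ij: "i < j" "j < m" for i j
  proof -
    have "{x\<in>A. hits a b c x i j} \<subseteq> E i j"
    proof
      fix x assume x: "x \<in> {x\<in>A. hits a b c x i j}"
      then have h: "hits a b c x i j" by simp
      have "x \<notin> Base" using base_nohit[OF _ ij] h by blast
      then have "x \<in> Ext" using x unfolding A_def by simp
      then obtain k l where kl: "(k,l) \<in> ?P" "x \<in> E k l" unfolding Ext_def by blast
      have "(k,l) = (i,j)"
      proof (rule ccontr)
        assume "(k,l) \<noteq> (i,j)"
        moreover have "x \<in> Cap k l" using kl E[of k l] by auto
        ultimately show False using cap_only[of x k l i j] kl ij h by auto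
      qed
      then show "x \<in> E i j" using kl by simp
    qed
    moreover have "E i j \<subseteq> allcols m" using E[OF ij] cap_col[of i j] by blast
    then have "finite (E i j)" using finite_allcols by (rule finite_subset)
    ultimately have "card {x\<in>A. hits a b c x i j} \<le> card (E i j)" by (rule card_mono[rotated])
    then show ?thesis using E[OF ij] by simp
  qed
  show ?thesis
    apply (rule exI[of _ A])
    using allcols_simple[OF AC] cardA cnt by simp
qed


lemma choose_ge: "n \<le> Suc n choose 2"
proof -
  have e: "Suc n choose 2 = Suc n * n div 2" by (simp add: choose_two)
  have "n * 2 \<le> Suc n * n" by (cases n) auto
  then have "n \<le> Suc n * n div 2" by (simp add: less_eq_div_iff_mult_less_eq)
  then show ?thesis using e by simp
qed

theorem mainTheorem6:
  fixes p q0 q1 r1 r2 m :: nat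
  assumes "p \<ge> 2"
    and "q0 \<le> p - 1" and "q1 \<le> p - 1"
    and "r1 + r2 = nat \<lceil>log 2 (real p - 1)\<rceil>"
    and "m \<ge> 2 * ((r1 + 1) choose 2) + 2 * ((r2 + 1) choose 2) + 2"
  shows "int (forb m 3 2 (Fabcd (p - q0) p p (p - q1))) \<ge>
         int (forb m 3 2 (pK2 p)) - int (min q0 q1 * ((r1 + 1) choose 2))
           - int (max q0 q1 * ((r2 + 1) choose 2))"
proof -
  note p2 = assms(1) and q0 = assms(2) and q1 = assms(3) and rr = assms(4) and mbig = assms(5)
  define a where "a = r1 + 1"
  define b where "b = m - (r2 + 1)"
  define c where "c = (q1 < q0)"
  define mn where "mn = min q0 q1"
  define mx where "mx = max q0 q1"
  let ?P = "{(i,j). i < j \<and> j < (m::nat)}"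
  have "r1 \<le> (r1 + 1) choose 2" "r2 \<le> (r2 + 1) choose 2" using choose_ge by auto
  then have mge: "r1 + r2 + 2 \<le> m" using mbig by linarith
  have ab: "a \<le> b" "b \<le> m" unfolding a_def b_def using mge by auto
  have mb: "m - b = r2 + 1" unfolding b_def using mge by auto
  have ar: "a + (m - b) - 2 = r1 + r2" using mb unfolding a_def by simp
  define bud where "bud i j = (if j < a then p - 1 - mn else if b \<le> i then p - 1 - mx else p - 1)" for i j :: nat
  have budle: "bud i j \<le> p - 1" for i j unfolding bud_def by auto
  have cap: "bud i j \<le> 2 ^ (a + (m - b) - 2)" if "i < j" "j < m" for i j
    using budle[of i j] log_bound[OF p2] rr ar by simp
  obtain A where As: "simple_smatrix m 3 A"
    and Acard: "card A = (\<Sum>S\<in>Pow {..<m}. card S + 1) + (\<Sum>(i,j)\<in>?P. bud i j)"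
    and Acnt: "\<And>i j. i < j \<Longrightarrow> j < m \<Longrightarrow> card {x\<in>A. hits a b c x i j} \<le> bud i j"
    using lower_construction[where m=m and a=a and b=b and c=c and bud=bud, OF ab cap] by blast
  have finA: "finite A" using As unfolding simple_smatrix_def by simp
  define nF where "nF u v = (if u = 0 \<and> v = 0 then p - q0 else if u = 1 \<and> v = 1 then p - q1 else p)" for u v :: nat
  have nF_sym: "nF u v = nF v u" for u v unfolding nF_def by auto
  have bud_lt: "bud i j < nF (Xb c (fst (desg a b i j))) (Xb c (snd (desg a b i j)))" if "i < j" for i j
  proof (cases "j < a")
    case True
    then show ?thesis using p2 q0 q1 unfolding bud_def nF_def desg_def Xb_def c_def mn_def by auto
  next
    case F: False
    show ?thesis
    proof (cases "b \<le> i")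
      case True
      then show ?thesis using F p2 q0 q1 unfolding bud_def nF_def desg_def Xb_def c_def mx_def by auto
    next
      case False
      then show ?thesis using F p2 q0 q1 unfolding bud_def nF_def desg_def Xb_def c_def by auto
    qed
  qed
  have avoid: "\<not> config 2 (Fabcd (p - q0) p p (p - q1)) m A"
  proof
    assume "config 2 (Fabcd (p - q0) p p (p - q1)) m A"
    from Fabcd_counts[OF this finA] obtain i' j' where ij': "i' \<noteq> j'" "i' < m" "j' < m"
      and k00: "p - q0 \<le> card {x\<in>A. x i' = 0 \<and> x j' = 0}"
      and k10: "p \<le> card {x\<in>A. x i' = 1 \<and> x j' = 0}"
      and k01: "p \<le> card {x\<in>A. x i' = 0 \<and> x j' = 1}"
      and k11: "p - q1 \<le> card {x\<in>A. x i' = 1 \<and> x j' = 1}" by blast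
    have kk: "nF u v \<le> card {x\<in>A. x i' = u \<and> x j' = v}" if "u \<le> 1" "v \<le> 1" for u v
    proof -
      have "u = 0 \<or> u = 1" "v = 0 \<or> v = 1" using that by auto
      then show ?thesis using k00 k10 k01 k11 unfolding nF_def by auto
    qed
    show False
    proof (cases "i' < j'")
      case True
      let ?u = "Xb c (fst (desg a b i' j'))" and ?v = "Xb c (snd (desg a b i' j'))"
      have "nF ?u ?v \<le> card {x\<in>A. x i' = ?u \<and> x j' = ?v}"
        by (rule kk; rule Xb_le; rule desg_le)
      also have "{x\<in>A. x i' = ?u \<and> x j' = ?v} = {x\<in>A. hits a b c x i' j'}" unfolding hits_def by simp
      also have "card \<dots> \<le> bud i' j'" by (rule Acnt[OF True ij'(3)])
      finally show False using bud_lt[OF True] by simp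
    next
      case False
      then have ji: "j' < i'" using ij'(1) by simp
      let ?u = "Xb c (fst (desg a b j' i'))" and ?v = "Xb c (snd (desg a b j' i'))"
      have "nF ?v ?u \<le> card {x\<in>A. x i' = ?v \<and> x j' = ?u}"
        by (rule kk; rule Xb_le; rule desg_le)
      also have "{x\<in>A. x i' = ?v \<and> x j' = ?u} = {x\<in>A. hits a b c x j' i'}" unfolding hits_def by auto
      also have "card \<dots> \<le> bud j' i'" by (rule Acnt[OF ji ij'(2)])
      finally show False using bud_lt[OF ji] nF_sym by simp
    qed
  qed
  have lowF: "card A \<le> forb m 3 2 (Fabcd (p - q0) p p (p - q1))" by (rule forb_ge[OF As avoid])
  have "pK2 p \<noteq> []" using p2 pK2_len[of p] by auto
  from forb_attained[OF this, of m 2] obtain A' where A's: "simple_smatrix m 3 A'"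
    and A'nc: "\<not> config 2 (pK2 p) m A'" and A'card: "card A' = forb m 3 2 (pK2 p)" by blast
  have up: "card A' \<le> (\<Sum>S\<in>Pow {..<m}. card S + 1) + (p - 1) * card ?P"
    by (rule upper_bound[OF A's A'nc])
  have finP: "finite ?P" by (rule finite_subset[of _ "{..<m} \<times> {..<m}"]) auto
  define fL where "fL = (\<lambda>(i::nat,j::nat). if j < a then mn else 0)"
  define fR where "fR = (\<lambda>(i::nat,j::nat). if \<not> j < a \<and> b \<le> i then mx else 0)"
  have mnle: "mn \<le> p - 1" "mx \<le> p - 1" unfolding mn_def mx_def using q0 q1 by auto
  have pw: "(\<lambda>(i,j). bud i j) ij + fL ij + fR ij = p - 1" for ij
    using mnle unfolding fL_def fR_def bud_def by (cases ij) auto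
  have sumeq: "(\<Sum>(i,j)\<in>?P. bud i j) + sum fL ?P + sum fR ?P = (p - 1) * card ?P"
  proof -
    have "(\<Sum>(i,j)\<in>?P. bud i j) + sum fL ?P + sum fR ?P = (\<Sum>ij\<in>?P. (\<lambda>(i,j). bud i j) ij + fL ij + fR ij)"
      by (simp add: sum.distrib)
    also have "\<dots> = (\<Sum>ij\<in>?P. p - 1)" using pw by simp
    finally show ?thesis by simp
  qed
  have sL: "sum fL ?P = mn * ((r1 + 1) choose 2)"
  proof -
    have "sum fL ?P = sum (\<lambda>_. mn) {ij \<in> ?P. snd ij < a}"
      unfolding fL_def using sum.inter_filter[OF finP, of "\<lambda>_. mn" "\<lambda>ij. snd ij < a"]
      by (simp add: case_prod_beta)
    also have "{ij \<in> ?P. snd ij < a} = {(i,j). 0 \<le> i \<and> i < j \<and> j < 0 + a}" using ab by auto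
    also have "sum (\<lambda>_. mn) \<dots> = mn * (a choose 2)" using card_pairs_shift[of 0 a] by simp
    finally show ?thesis unfolding a_def by simp
  qed
  have sR: "sum fR ?P = mx * ((r2 + 1) choose 2)"
  proof -
    have "sum fR ?P = sum (\<lambda>_. mx) {ij \<in> ?P. \<not> snd ij < a \<and> b \<le> fst ij}"
      unfolding fR_def using sum.inter_filter[OF finP, of "\<lambda>_. mx" "\<lambda>ij. \<not> snd ij < a \<and> b \<le> fst ij"]
      by (simp add: case_prod_beta)
    also have "{ij \<in> ?P. \<not> snd ij < a \<and> b \<le> fst ij} = {(i,j). b \<le> i \<and> i < j \<and> j < b + (m - b)}" using ab by auto
    also have "sum (\<lambda>_. mx) \<dots> = mx * ((m - b) choose 2)" using card_pairs_shift[of b "m - b"] by simp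
    finally show ?thesis using mb by simp
  qed
  have "int (forb m 3 2 (pK2 p)) \<le> int (forb m 3 2 (Fabcd (p - q0) p p (p - q1))) + int (mn * ((r1 + 1) choose 2)) + int (mx * ((r2 + 1) choose 2))"
    using lowF up A'card Acard sumeq sL sR by linarith
  then show ?thesis unfolding mn_def mx_def by linarith
qed


end
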